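(* Let $\mathfrak S$ be a commutative Noetherian semiring. Then for every set $\sigma_{\mathfrak S}$ of ideals of $\mathfrak S$, the space $\sigma_{\mathfrak S}$ with the ideal topology is quasi-compact.
   Context: A semiring $(\mathfrak S,+,0,\cdot,1)$ has $(\mathfrak S,+,0)$ a commutative monoid, $(\mathfrak S,\cdot,1)$ a monoid, $0r=r0=0$, and two-sided distributivity; all semirings are commutative. An ideal is a nonempty proper subset closed under addition and under multiplication by elements of $\mathfrak S$. Noetherian means every ideal is finitely generated (equivalently ascending chain condition on ideals). For an ideal $\mathfrak a$, $\mathfrak a^{\uparrow}=\{\mathfrak x\in\sigma_{\mathfrak S}\mid\mathfrak a\subseteq\mathfrak x\}$; the ideal topology on $\sigma_{\mathfrak S}$ has the sets $\mathfrak a^{\uparrow}$ ($\mathfrak a$ any ideal) as a subbasis of closed sets. Quasi-compact means every open cover has a finite subcover. *)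

theory Defs
  imports "HOL-Analysis.Analysis"
begin

text \<open>Commutative semirings with 0 and 1 (0 absorbing), without requiring 0 \<noteq> 1:
  the class constraint {comm_semiring_0, comm_monoid_mult} is used below.\<close>

definition semiring_ideal :: "'a::{comm_semiring_0,comm_monoid_mult} set \<Rightarrow> bool" where
  "semiring_ideal I \<longleftrightarrow> I \<noteq> {} \<and> I \<noteq> UNIV
     \<and> (\<forall>x\<in>I. \<forall>y\<in>I. x + y \<in> I) \<and> (\<forall>r. \<forall>x\<in>I. r * x \<in> I)"

definition ideal_span :: "'a::{comm_semiring_0,comm_monoid_mult} set \<Rightarrow> 'a set" where
  "ideal_span F = {y. \<exists>G r. finite G \<and> G \<subseteq> F \<and> y = (\<Sum>a\<in>G. r a * a)}"

definition finitely_generated_ideal :: "'a::{comm_semiring_0,comm_monoid_mult} set \<Rightarrow> bool" where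
  "finitely_generated_ideal I \<longleftrightarrow> (\<exists>F. finite F \<and> F \<subseteq> I \<and> I = ideal_span F)"

definition noetherian_semiring :: "'a::{comm_semiring_0,comm_monoid_mult} itself \<Rightarrow> bool" where
  "noetherian_semiring TYPE('a) \<longleftrightarrow>
     (\<forall>I::'a set. semiring_ideal I \<longrightarrow> finitely_generated_ideal I)"

definition up_set :: "'a set set \<Rightarrow> 'a set \<Rightarrow> 'a set set" where
  "up_set \<sigma> a = {x \<in> \<sigma>. a \<subseteq> x}"

text \<open>Ideal topology on sigma: closed subbasis {a\<up> | a ideal}; so the open subbasis
  consists of complements in sigma (together with sigma itself, which is always open).\<close>
definition ideal_topology :: "'a::{comm_semiring_0,comm_monoid_mult} set set \<Rightarrow> 'a set topology" where
  "ideal_topology \<sigma> = topology_generated_by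
     (insert \<sigma> {\<sigma> - up_set \<sigma> a | a. semiring_ideal a})"

end

theory Submission
  imports Defs
begin

lemma ideal_zero:
  assumes "semiring_ideal x" shows "0 \<in> x"
proof -
  from assms obtain y where "y \<in> x" unfolding semiring_ideal_def by blast
  then have "0 * y \<in> x" using assms unfolding semiring_ideal_def by blast
  then show ?thesis by simp
qed

lemma ideal_sum:
  assumes "semiring_ideal x" "finite G" "G \<subseteq> x"
  shows "(\<Sum>a\<in>G. r a * a) \<in> x"
  using assms(2,3)
proof (induction G rule: finite_induct)
  case empty
  then show ?case using ideal_zero[OF assms(1)] by simp
next
  case (insert g G)
  then have "r g * g \<in> x" using assms(1) unfolding semiring_ideal_def by blast
  moreover have "(\<Sum>a\<in>G. r a * a) \<in> x" using insert by blast
  ultimately show ?case using insert assms(1) unfolding semiring_ideal_def by simp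
qed

lemma span_sub:
  assumes "semiring_ideal x" "G \<subseteq> x"
  shows "ideal_span G \<subseteq> x"
proof
  fix y assume "y \<in> ideal_span G"
  then obtain H r where "finite H" "H \<subseteq> G" "y = (\<Sum>a\<in>H. r a * a)"
    unfolding ideal_span_def by blast
  then show "y \<in> x" using ideal_sum[OF assms(1), of H r] assms(2) by blast
qed

lemma span_fin:
  assumes "y \<in> ideal_span U"
  shows "\<exists>G. finite G \<and> G \<subseteq> U \<and> y \<in> ideal_span G"
proof -
  obtain G r where 1: "finite G" "G \<subseteq> U" "y = (\<Sum>a\<in>G. r a * a)"
    using assms unfolding ideal_span_def by blast
  have "y \<in> ideal_span G" unfolding ideal_span_def
    by (intro CollectI exI[of _ G] exI[of _ r]) (use 1 in simp)
  then show ?thesis using 1 by blast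
qed

lemma span_inc:
  fixes U :: "'a::{comm_semiring_0,comm_monoid_mult} set"
  shows "U \<subseteq> ideal_span U"
proof
  fix a assume "a \<in> U"
  then have "finite {a} \<and> {a} \<subseteq> U \<and> a = (\<Sum>b\<in>{a}. (\<lambda>_. 1) b * b)" by auto
  then show "a \<in> ideal_span U" unfolding ideal_span_def
    by (intro CollectI exI[of _ "{a}"] exI[of _ "\<lambda>_. 1"])
qed

lemma span_zero:
  fixes U :: "'a::{comm_semiring_0,comm_monoid_mult} set"
  shows "0 \<in> ideal_span U"
  unfolding ideal_span_def by (rule CollectI, rule exI[of _ "{}"], auto)

lemma span_add:
  fixes U :: "'a::{comm_semiring_0,comm_monoid_mult} set"
  assumes "y \<in> ideal_span U" "z \<in> ideal_span U"
  shows "y + z \<in> ideal_span U"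
proof -
  obtain G1 r where 1: "finite G1" "G1 \<subseteq> U" "y = (\<Sum>a\<in>G1. r a * a)"
    using assms(1) unfolding ideal_span_def by blast
  obtain G2 s where 2: "finite G2" "G2 \<subseteq> U" "z = (\<Sum>a\<in>G2. s a * a)"
    using assms(2) unfolding ideal_span_def by blast
  define r' where "r' a = (if a \<in> G1 then r a else 0)" for a
  define s' where "s' a = (if a \<in> G2 then s a else 0)" for a
  have "y = (\<Sum>a\<in>G1 \<union> G2. r' a * a)"
    unfolding 1(3) r'_def
    by (rule sum.mono_neutral_cong_left) (use 1 2 in auto)
  moreover have "z = (\<Sum>a\<in>G1 \<union> G2. s' a * a)"
    unfolding 2(3) s'_def
    by (rule sum.mono_neutral_cong_left) (use 1 2 in auto)
  ultimately have "y + z = (\<Sum>a\<in>G1 \<union> G2. (r' a + s' a) * a)"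
    by (simp add: sum.distrib distrib_right)
  then show ?thesis unfolding ideal_span_def
    by (intro CollectI exI[of _ "G1 \<union> G2"] exI[of _ "\<lambda>a. r' a + s' a"]) (use 1 2 in simp)
qed

lemma span_mult:
  fixes U :: "'a::{comm_semiring_0,comm_monoid_mult} set"
  assumes "y \<in> ideal_span U"
  shows "c * y \<in> ideal_span U"
proof -
  obtain G1 r where 1: "finite G1" "G1 \<subseteq> U" "y = (\<Sum>a\<in>G1. r a * a)"
    using assms(1) unfolding ideal_span_def by blast
  then have "c * y = (\<Sum>a\<in>G1. (c * r a) * a)"
    by (simp add: sum_distrib_left mult.assoc)
  then show ?thesis unfolding ideal_span_def
    by (intro CollectI exI[of _ G1] exI[of _ "\<lambda>a. c * r a"]) (use 1 in simp)
qed

lemma key_alg: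
  fixes U :: "'a::{comm_semiring_0,comm_monoid_mult} set"
  assumes noeth: "noetherian_semiring TYPE('a)"
  shows "\<exists>G. finite G \<and> G \<subseteq> U \<and> (\<forall>x. semiring_ideal x \<longrightarrow> G \<subseteq> x \<longrightarrow> U \<subseteq> x)"
proof (cases "ideal_span U = UNIV")
  case True
  then have "1 \<in> ideal_span U" by simp
  then obtain G where G: "finite G" "G \<subseteq> U" "1 \<in> ideal_span G" using span_fin by blast
  have "\<not> (semiring_ideal x \<and> G \<subseteq> x)" for x
  proof
    assume h: "semiring_ideal x \<and> G \<subseteq> x"
    then have "1 \<in> x" using span_sub G by blast
    then have "\<forall>r. r * 1 \<in> x" using h unfolding semiring_ideal_def by blast
    then have "x = UNIV" by (simp add: set_eq_iff)
    then show False using h unfolding semiring_ideal_def by blast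
  qed
  then show ?thesis using G(1,2) by (intro exI[of _ G]) blast
next
  case False
  have "semiring_ideal (ideal_span U)"
    unfolding semiring_ideal_def
  proof (intro conjI)
    show "ideal_span U \<noteq> {}" using span_zero by blast
    show "ideal_span U \<noteq> UNIV" by (rule False)
    show "\<forall>x\<in>ideal_span U. \<forall>y\<in>ideal_span U. x + y \<in> ideal_span U" using span_add by blast
    show "\<forall>r. \<forall>x\<in>ideal_span U. r * x \<in> ideal_span U" using span_mult by blast
  qed
  then obtain F where F: "finite F" "F \<subseteq> ideal_span U" "ideal_span U = ideal_span F"
    using noeth unfolding noetherian_semiring_def finitely_generated_ideal_def by blast
  have "\<forall>f\<in>F. \<exists>G. finite G \<and> G \<subseteq> U \<and> f \<in> ideal_span G"
    using F(2) span_fin by blast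
  then have "\<exists>Gf. \<forall>f\<in>F. finite (Gf f) \<and> Gf f \<subseteq> U \<and> f \<in> ideal_span (Gf f)"
    by (rule bchoice)
  then obtain Gf where Gf: "\<forall>f\<in>F. finite (Gf f) \<and> Gf f \<subseteq> U \<and> f \<in> ideal_span (Gf f)"
    by blast
  define G where "G = (\<Union>f\<in>F. Gf f)"
  have "finite G" "G \<subseteq> U" unfolding G_def using Gf F(1) by auto
  moreover have "U \<subseteq> x" if "semiring_ideal x" "G \<subseteq> x" for x
  proof -
    have "F \<subseteq> x"
    proof
      fix f assume f: "f \<in> F"
      then have "Gf f \<subseteq> x" using that(2) unfolding G_def by blast
      then have "ideal_span (Gf f) \<subseteq> x" by (rule span_sub[OF that(1)])
      then show "f \<in> x" using Gf f by blast
    qed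
    then have "ideal_span F \<subseteq> x" by (rule span_sub[OF that(1)])
    then show ?thesis using F(3) span_inc[of U] by simp
  qed
  ultimately show ?thesis by (intro exI[of _ G]) simp
qed

lemma topo_eq:
  assumes "U \<in> B" "\<forall>b\<in>B. b \<subseteq> U"
  shows "(finite intersection_of (\<lambda>x. x \<in> B) relative_to U) = (finite' intersection_of (\<lambda>x. x \<in> B))"
proof (intro ext iffI)
  fix S assume "(finite intersection_of (\<lambda>x. x \<in> B) relative_to U) S"
  then obtain V where V: "(finite intersection_of (\<lambda>x. x \<in> B)) V" "U \<inter> V = S"
    unfolding relative_to_def by blast
  then obtain F where F: "finite F" "F \<subseteq> Collect (\<lambda>x. x \<in> B)" "\<Inter>F = V"
    unfolding intersection_of_def by blast
  have "\<Inter>(insert U F) = S" using F V(2) by auto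
  moreover have "finite (insert U F) \<and> insert U F \<noteq> {}" using F by simp
  moreover have "insert U F \<subseteq> Collect (\<lambda>x. x \<in> B)" using F assms by auto
  ultimately show "(finite' intersection_of (\<lambda>x. x \<in> B)) S"
    unfolding intersection_of_def by blast
next
  fix S assume "(finite' intersection_of (\<lambda>x. x \<in> B)) S"
  then obtain F where F: "finite F" "F \<noteq> {}" "F \<subseteq> Collect (\<lambda>x. x \<in> B)" "\<Inter>F = S"
    unfolding intersection_of_def by blast
  have "U \<inter> \<Inter>F = S" using assms F by blast
  moreover have "(finite intersection_of (\<lambda>x. x \<in> B)) (\<Inter>F)"
    unfolding intersection_of_def using F by blast
  ultimately show "(finite intersection_of (\<lambda>x. x \<in> B) relative_to U) S"
    unfolding relative_to_def by blast
qed

theorem theorem3p7: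
  fixes \<sigma> :: "'a::{comm_semiring_0,comm_monoid_mult} set set"
  assumes "noetherian_semiring TYPE('a)"
    and "\<forall>x\<in>\<sigma>. semiring_ideal x"
  shows "compact_space (ideal_topology \<sigma>)"
proof -
  define B where "B = insert \<sigma> {\<sigma> - up_set \<sigma> a | a. semiring_ideal a}"
  have UB: "\<Union>B = \<sigma>" unfolding B_def by auto
  have eq: "topology (arbitrary union_of (finite intersection_of (\<lambda>x. x \<in> B) relative_to \<Union>B))
      = ideal_topology \<sigma>"
  proof -
    have h1: "\<sigma> \<in> B" unfolding B_def by simp
    have h2: "\<forall>b\<in>B. b \<subseteq> \<sigma>" unfolding B_def by auto
    show ?thesis
      unfolding ideal_topology_def B_def[symmetric] generate_topology_on_eq UB topo_eq[OF h1 h2] ..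
  qed
  show ?thesis
  proof (rule Alexander_subbase[OF eq])
    fix C assume C: "C \<subseteq> B" "\<Union>C = topspace (ideal_topology \<sigma>)"
    have top: "topspace (ideal_topology \<sigma>) = \<sigma>"
      unfolding ideal_topology_def B_def[symmetric] topology_generated_by_topspace UB ..
    show "\<exists>C'. finite C' \<and> C' \<subseteq> C \<and> \<Union>C' = topspace (ideal_topology \<sigma>)"
    proof (cases "\<sigma> \<in> C")
      case True
      then show ?thesis using top by (intro exI[of _ "{\<sigma>}"]) auto
    next
      case False
      define A where "A = {a. semiring_ideal a \<and> \<sigma> - up_set \<sigma> a \<in> C}"
      have Csub: "C \<subseteq> (\<lambda>a. \<sigma> - up_set \<sigma> a) ` A"
        using C(1) False unfolding B_def A_def by auto
      obtain G where G0: "finite G \<and> G \<subseteq> \<Union>A \<and>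
        (\<forall>x. semiring_ideal x \<longrightarrow> G \<subseteq> x \<longrightarrow> \<Union>A \<subseteq> x)"
        using key_alg[OF assms(1), of "\<Union>A"] by (rule exE)
      note G = conjunct1[OF G0] conjunct1[OF conjunct2[OF G0]] conjunct2[OF conjunct2[OF G0]]
      obtain A' where A': "finite A'" "A' \<subseteq> A" "G \<subseteq> \<Union>A'"
        using finite_subset_Union[OF G(1,2)] by blast
      define C' where "C' = (\<lambda>a. \<sigma> - up_set \<sigma> a) ` A'"
      have "finite C'" "C' \<subseteq> C" unfolding C'_def using A' unfolding A_def by auto
      moreover have "\<Union>C' = \<sigma>"
      proof
        show "\<Union>C' \<subseteq> \<sigma>" unfolding C'_def by auto
        show "\<sigma> \<subseteq> \<Union>C'"
        proof
          fix x assume x: "x \<in> \<sigma>"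
          show "x \<in> \<Union>C'"
          proof (rule ccontr)
            assume "x \<notin> \<Union>C'"
            then have "\<forall>a\<in>A'. a \<subseteq> x" unfolding C'_def up_set_def using x by auto
            then have "G \<subseteq> x" using A'(3) by blast
            then have "\<Union>A \<subseteq> x" using G(3) assms(2) x by blast
            moreover have "x \<in> \<Union>C" using C(2) top x by simp
            then obtain X where X: "X \<in> C" "x \<in> X" by blast
            then obtain a where a: "a \<in> A" "X = \<sigma> - up_set \<sigma> a" using Csub by blast
            then have "\<not> a \<subseteq> x" using X(2) unfolding up_set_def by blast
            moreover have "a \<subseteq> x" using a(1) \<open>\<Union>A \<subseteq> x\<close> by blast
            ultimately show False by blast
          qed
        qed
      qed
      ultimately show ?thesis using top by blast
    qed
  qed
qed

end
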